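(* In the setting of the standard presentation of $\mathbb{A}_{\Gamma,u,k}$, let $w\in W$ be adjacent to $u$ with $e=\{u,w\}$, $m_e=2\ell_e$, and assume $\ell_e\equiv 0\pmod k$. Let $M_{B(w,u)}$ be the $k\times(k+1)$ matrix of Fox derivatives, evaluated in $\Lambda=\mathbb{C}[H_1(\mathbb{A}_{\Gamma,u,k})]$, of the $k$ relations (RB) for $w$ with respect to $w_0,\dots,w_{k-1},\bar u$. Let $\mathfrak p\subset\Lambda$ be the ideal generated by $1-t_{\bar u}t_{w,0}t_{w,1}\cdots t_{w,k-1}$, where $t_{\bar u},t_{w,i}$ are the homology classes of $\bar u,w_i$. Then $M_{B(w,u)}\otimes\Lambda/\mathfrak p$ has rank $1$.
   Context: Setting: $\Gamma=(V,E,m)$ finite simple graph with even labels $m_e=2\ell_e$; $\mathbb{A}_\Gamma=\langle V\mid (xy)^{\ell_e}=(yx)^{\ell_e},\ \{x,y\}\in E\rangle$. For $u\in V$, $k\ge2$, $\mathbb{A}_{\Gamma,u,k}=\ker(\mathbb{A}_\Gamma\to\mathbb{Z}_k,\ u\mapsto1,\ v\mapsto0\ (v\ne u))$. $V_{2,u}$ = vertices joined to $u$ by an edge of label 2, $W=V\setminus(\{u\}\cup V_{2,u})$. Standard presentation generators: $\bar u=u^k$, $v\in V_{2,u}$, $w_i=u^iwu^{-i}$ ($w\in W$, $0\le i<k$). The relations (RB) for $w\in W$ adjacent to $u$: for $0\le i<k$, $W_i\cdots W_{i+\ell_e-1}=W_{i+1}\cdots W_{i+\ell_e}$ with $W_j=\bar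 u^qw_s\bar u^{-q}$ for $j=qk+s$, $0\le s<k$. $H_1(\mathbb{A}_{\Gamma,u,k})$ is free abelian and when $k\mid\ell_e$ the classes $t_{\bar u},t_{w,0},\dots,t_{w,k-1}$ are independent; $\mathfrak p$ is prime and rank over $\Lambda/\mathfrak p$ means rank over its fraction field. Fox derivatives of $A=B$ are those of $AB^{-1}$. *)

theory Defs
  imports "Jordan_Normal_Form.DL_Submatrix" "Jordan_Normal_Form.Determinant"
    "HOL-Library.Poly_Mapping" "HOL-Library.Function_Algebras"
begin

text \<open>Free generators relevant for the relations (RB) of a vertex w:
  WGen s stands for w_s (0 \<le> s < k) and UBar stands for \<bar>u = u^k.\<close>
datatype gen = WGen nat | UBar

text \<open>Words in the free group: letters (g, True) = g, (g, False) = g^{-1}.\<close>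
type_synonym word = "(gen \<times> bool) list"

definition word_inv :: "word \<Rightarrow> word" where
  "word_inv xs = rev (map (\<lambda>(g, b). (g, \<not> b)) xs)"

definition Wletter :: "nat \<Rightarrow> nat \<Rightarrow> word" where
  "Wletter k j = replicate (j div k) (UBar, True) @ [(WGen (j mod k), True)]
                 @ replicate (j div k) (UBar, False)"

text \<open>Relation (RB) number i, written as A B^{-1} for the relation A = B
  with A = W_i \<dots> W_{i+l-1}, B = W_{i+1} \<dots> W_{i+l}.\<close>
definition RB_word :: "nat \<Rightarrow> nat \<Rightarrow> nat \<Rightarrow> word" where
  "RB_word k l i = concat (map (Wletter k) [i..<i+l])
                   @ word_inv (concat (map (Wletter k) [i+1..<i+l+1]))"

text \<open>Group algebra C[H] of an abelian group H; the monomial of h \<in> H.\<close>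
definition mono :: "'h::monoid_add \<Rightarrow> ('h \<Rightarrow>\<^sub>0 complex)" where
  "mono h = Poly_Mapping.single h 1"

text \<open>Fox derivative d/dy of a word, followed by the ring map
  Z[F] \<rightarrow> C[H] induced by the abelianization phi : generators \<rightarrow> H.\<close>
fun fox :: "(gen \<Rightarrow> 'h::ab_group_add) \<Rightarrow> gen \<Rightarrow> word \<Rightarrow> ('h \<Rightarrow>\<^sub>0 complex)" where
  "fox \<phi> y [] = 0"
| "fox \<phi> y ((g, True) # xs) =
     (if g = y then 1 else 0) + mono (\<phi> g) * fox \<phi> y xs"
| "fox \<phi> y ((g, False) # xs) =
     (if g = y then - mono (- \<phi> g) else 0) + mono (- \<phi> g) * fox \<phi> y xs"

text \<open>The k x (k+1) Fox matrix M_{B(w,u)}: rows = relations (RB) i = 0..k-1,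
  columns = w_0, ..., w_{k-1}, \<bar>u.\<close>
definition fox_matrix_RB ::
  "(gen \<Rightarrow> 'h::ab_group_add) \<Rightarrow> nat \<Rightarrow> nat \<Rightarrow> ('h \<Rightarrow>\<^sub>0 complex) mat" where
  "fox_matrix_RB \<phi> k l = mat k (k + 1)
     (\<lambda>(i, j). fox \<phi> (if j < k then WGen j else UBar) (RB_word k l i))"

text \<open>Rank of a matrix A over (the fraction field of) R/P, for a prime ideal P of
  the commutative ring R: the largest size of a square minor of A not lying in P
  (determinantal rank of the reduction of A modulo P).\<close>
definition rank_mod :: "'a::comm_ring_1 set \<Rightarrow> 'a mat \<Rightarrow> nat" where
  "rank_mod P A = Max {r. \<exists>I J. I \<subseteq> {..<dim_row A} \<and> J \<subseteq> {..<dim_col A} \<and>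
        card I = r \<and> card J = r \<and> det (submatrix A I J) \<notin> P}"

end

theory Submission
  imports Defs
begin


fun ab :: "(gen \<Rightarrow> 'h::ab_group_add) \<Rightarrow> word \<Rightarrow> 'h" where
  "ab \<phi> [] = 0"
| "ab \<phi> ((g, True) # xs) = \<phi> g + ab \<phi> xs"
| "ab \<phi> ((g, False) # xs) = - \<phi> g + ab \<phi> xs"

lemma mono_add: "Defs.mono (a + b) = Defs.mono a * Defs.mono b"
  by (simp add: Defs.mono_def mult_single)
lemma mono_0[simp]: "Defs.mono 0 = 1"
  by (simp add: Defs.mono_def)
lemma mono_neg: "Defs.mono (- a :: 'h::ab_group_add) * Defs.mono a = 1"
  by (simp flip: mono_add)
lemma mono_neg': "Defs.mono (a :: 'h::ab_group_add) * Defs.mono (- a) = 1"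
  by (simp flip: mono_add)

lemma mono_diff: "Defs.mono ((a :: 'h::ab_group_add) - b) = Defs.mono a * Defs.mono (- b)"
  by (simp add: mono_add[symmetric])
lemma mono_neg_add: "Defs.mono (- (a :: 'h::ab_group_add) - b) = Defs.mono (- a) * Defs.mono (- b)"
  by (simp add: mono_add[symmetric])
lemma mono_cancel1: "Defs.mono (a :: 'h::ab_group_add) * (Defs.mono (- a) * c) = c"
  by (simp add: mult.assoc[symmetric] mono_neg')
lemma mono_cancel2: "Defs.mono (- (a :: 'h::ab_group_add)) * (Defs.mono a * c) = c"
  by (simp add: mult.assoc[symmetric] mono_neg)

lemma mono_cancel3: "Defs.mono (a :: 'h::ab_group_add) * (c * (Defs.mono (- a) * d)) = c * d"
  by (metis mono_cancel1 mult.left_commute)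

lemma ab_append: "ab \<phi> (xs @ ys) = ab \<phi> xs + ab \<phi> ys"
proof (induction xs)
  case (Cons x xs) then show ?case by (cases x; cases "snd x") (auto simp: algebra_simps)
qed simp

lemma fox_append: "fox \<phi> y (xs @ ys) = fox \<phi> y xs + Defs.mono (ab \<phi> xs) * fox \<phi> y ys"
proof (induction xs)
  case (Cons x xs) then show ?case by (cases x; cases "snd x") (auto simp: mono_add mono_diff algebra_simps)
qed simp

lemma word_inv_Cons: "word_inv (x # xs) = word_inv xs @ [(fst x, \<not> snd x)]"
  by (cases x) (simp add: word_inv_def)

lemma word_inv_Nil[simp]: "word_inv [] = []" by (simp add: word_inv_def)

lemma ab_inv: "ab \<phi> (word_inv xs) = - ab \<phi> xs"
proof (induction xs)
  case (Cons x xs) then show ?case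
    by (cases x; cases "snd x") (auto simp: word_inv_Cons ab_append)
qed simp

lemma fox_inv: "fox \<phi> y (word_inv xs) = - Defs.mono (- ab \<phi> xs) * fox \<phi> y xs"
proof (induction xs)
  case (Cons x xs)
  obtain g b where x: "x = (g, b)" by (cases x)
  show ?case
  proof (cases b)
    case True
    have "fox \<phi> y (word_inv (x # xs)) = - Defs.mono (- ab \<phi> xs) * fox \<phi> y xs
       + Defs.mono (- ab \<phi> xs) * (if g = y then - Defs.mono (- \<phi> g) else 0)"
      using Cons by (simp add: x True word_inv_Cons fox_append ab_inv)
    also have "\<dots> = - Defs.mono (- ab \<phi> (x # xs)) * fox \<phi> y (x # xs)"
      apply (simp add: x True algebra_simps mono_neg_add)
      using mono_cancel3[of "\<phi> g" "fox \<phi> y xs" "Defs.mono (- ab \<phi> xs)"] by (auto simp: mono_cancel1)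
    finally show ?thesis .
  next
    case False
    have "fox \<phi> y (word_inv (x # xs)) = - Defs.mono (- ab \<phi> xs) * fox \<phi> y xs
       + Defs.mono (- ab \<phi> xs) * (if g = y then 1 else 0)"
      using Cons by (simp add: x False word_inv_Cons fox_append ab_inv)
    also have "\<dots> = - Defs.mono (- ab \<phi> (x # xs)) * fox \<phi> y (x # xs)"
      apply (simp add: x False algebra_simps mono_diff mono_neg_add)
      using mono_cancel3[of "\<phi> g" "fox \<phi> y xs" "Defs.mono (- ab \<phi> xs)"] by (auto simp: mono_cancel1)
    finally show ?thesis .
  qed
qed simp

lemma fox_notin: "y \<notin> fst ` set xs \<Longrightarrow> fox \<phi> y xs = 0"
proof (induction xs)
  case (Cons x xs) then show ?case by (cases x; cases "snd x") auto
qed simp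



lemma prod_diff_dvd:
  fixes g :: "'a::comm_ring_1"
  assumes "finite S" "\<And>i. i \<in> S \<Longrightarrow> g dvd f i - h i"
  shows "g dvd prod f S - prod h S"
  using assms
proof (induction S rule: finite_induct)
  case (insert a S)
  have "prod f (insert a S) - prod h (insert a S) = (f a - h a) * prod f S + h a * (prod f S - prod h S)"
    using insert by (simp add: algebra_simps)
  then show ?case using insert by (simp add: dvd_add dvd_mult2 dvd_mult)
qed simp

lemma det_cong_dvd:
  fixes g :: "'a::comm_ring_1"
  assumes A: "A \<in> carrier_mat r r" and B: "B \<in> carrier_mat r r"
    and d: "\<And>i j. i < r \<Longrightarrow> j < r \<Longrightarrow> g dvd A $$ (i,j) - B $$ (i,j)"
  shows "g dvd det A - det B"
proof -
  have "det A - det B = (\<Sum>p\<in>{p. p permutes {0..<r}}. signof p *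
          ((\<Prod>i = 0..<r. A $$ (i, p i)) - (\<Prod>i = 0..<r. B $$ (i, p i))))"
    by (simp add: det_def'[OF A] det_def'[OF B] sum_subtractf algebra_simps)
  also have "g dvd \<dots>"
  proof (rule dvd_sum, rule dvd_mult)
    fix p assume "p \<in> {p. p permutes {0..<r}}"
    then have "\<And>i. i < r \<Longrightarrow> p i < r" using permutes_in_image by fastforce
    then show "g dvd (\<Prod>i = 0..<r. A $$ (i, p i)) - (\<Prod>i = 0..<r. B $$ (i, p i))"
      by (intro prod_diff_dvd) (auto intro: d)
  qed
  finally show ?thesis .
qed

lemma det_rank1:
  fixes \<alpha> \<beta> :: "nat \<Rightarrow> 'a::comm_ring_1"
  assumes r: "r \<ge> 2"
  shows "det (mat r r (\<lambda>(i,j). \<alpha> i * \<beta> j)) = 0"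
proof -
  have eq: "mat r r (\<lambda>(i,j). \<alpha> i * \<beta> j) = mat\<^sub>r r r (\<lambda>i. \<alpha> i \<cdot>\<^sub>v vec r \<beta>)"
    by (rule eq_matI) auto
  have "det (mat\<^sub>r r r (\<lambda>i. vec r \<beta>)) = 0"
    by (rule det_identical_rows[of _ r 0 1]) (use r in auto)
  then show ?thesis unfolding eq
    by (subst det_rows_mul) auto
qed



definition sig :: "(('n \<Rightarrow> int) \<Rightarrow> int) \<Rightarrow> (('n \<Rightarrow> int) \<Rightarrow>\<^sub>0 complex) \<Rightarrow> complex" where
  "sig lam f = Sum_any (\<lambda>h. Poly_Mapping.lookup f h when lam h = 0)"

lemma sig_superset:
  assumes "finite S" "Poly_Mapping.keys f \<subseteq> S"
  shows "sig lam f = (\<Sum>h\<in>S. Poly_Mapping.lookup f h when lam h = 0)"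
  unfolding sig_def
  by (rule Sum_any.expand_superset) (use assms in \<open>auto simp: in_keys_iff\<close>)

lemma sig_diff: "sig lam (f - g) = sig lam f - sig lam g"
proof -
  let ?S = "Poly_Mapping.keys f \<union> Poly_Mapping.keys g"
  have "Poly_Mapping.keys (f - g) \<subseteq> ?S" by (auto simp: in_keys_iff Poly_Mapping.lookup_minus)
  then have "sig lam (f - g) = (\<Sum>h\<in>?S. Poly_Mapping.lookup (f - g) h when lam h = 0)"
    by (intro sig_superset) auto
  also have "\<dots> = (\<Sum>h\<in>?S. Poly_Mapping.lookup f h when lam h = 0) - (\<Sum>h\<in>?S. Poly_Mapping.lookup g h when lam h = 0)"
    by (subst sum_subtractf[symmetric]) (rule sum.cong; auto simp: when_def Poly_Mapping.lookup_minus)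
  also have "\<dots> = sig lam f - sig lam g"
    by (subst (1 2) sig_superset[of ?S]) auto
  finally show ?thesis .
qed

lemma lookup_mult_mono: fixes T :: "'h::ab_group_add" shows "Poly_Mapping.lookup (x * Defs.mono T) h = Poly_Mapping.lookup x (h - T)"
proof -
  have "Poly_Mapping.lookup (x * Defs.mono T) h = (\<Sum>l. Poly_Mapping.lookup x l * (1 when h = l + T))"
  proof -
    have i: "(\<Sum>aa. (1::complex) when T = aa \<and> h = a + aa) = (1 when h = a + T)" for a
    proof -
      have "(\<Sum>aa. (1::complex) when T = aa \<and> h = a + aa) = (\<Sum>aa. ((1 when h = a + aa) when T = aa))"
        by (simp add: when_when conj_commute)
      then show ?thesis by simp
    qed
    show ?thesis by (simp add: Defs.mono_def lookup_mult lookup_single when_when i)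
  qed
  also have "\<dots> = (\<Sum>l. Poly_Mapping.lookup x l when l = h - T)"
    by (rule Sum_any.cong) (auto simp: when_def)
  finally show ?thesis by simp
qed

lemma sig_shift:
  assumes add: "\<And>a b. lam (a + b) = lam a + lam b" and T: "lam T = 0"
  shows "sig lam (x * Defs.mono T) = sig lam x"
proof -
  have k: "Poly_Mapping.keys (x * Defs.mono T) \<subseteq> (\<lambda>h. h + T) ` Poly_Mapping.keys x"
  proof
    fix h assume "h \<in> Poly_Mapping.keys (x * Defs.mono T)"
    then have "h - T \<in> Poly_Mapping.keys x" by (simp add: in_keys_iff lookup_mult_mono)
    then show "h \<in> (\<lambda>h. h + T) ` Poly_Mapping.keys x" by (intro image_eqI[of _ _ "h - T"]) auto
  qed
  have "sig lam (x * Defs.mono T) = (\<Sum>h\<in>(\<lambda>h. h + T) ` Poly_Mapping.keys x. Poly_Mapping.lookup (x * Defs.mono T) h when lam h = 0)"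
    by (rule sig_superset) (use k in auto)
  also have "\<dots> = (\<Sum>h\<in>Poly_Mapping.keys x. Poly_Mapping.lookup x h when lam (h + T) = 0)"
    by (subst sum.reindex) (auto simp: inj_on_def lookup_mult_mono)
  also have "\<dots> = sig lam x"
    by (subst sig_superset[of "Poly_Mapping.keys x"]) (auto simp: add T)
  finally show ?thesis .
qed

lemma not_dvd_char:
  fixes T t0 :: "'n \<Rightarrow> int" and lam :: "('n \<Rightarrow> int) \<Rightarrow> int"
  assumes add: "\<And>a b. lam (a + b) = lam a + lam b" and T: "lam T = 0" and t0: "lam t0 \<noteq> 0"
    and n: "n > 0"
  shows "\<not> (1 - Defs.mono T) dvd (of_nat n * (1 - Defs.mono (- t0)))"
proof
  assume "(1 - Defs.mono T) dvd (of_nat n * (1 - Defs.mono (- t0)))"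
  then obtain x where x: "of_nat n * (1 - Defs.mono (- t0)) = (1 - Defs.mono T) * x" by (auto elim: dvdE)
  have l0: "lam 0 = 0" using add[of 0 0] by simp
  have lneg: "lam (- t0) \<noteq> 0" using add[of t0 "- t0"] l0 t0 by simp
  have "sig lam ((1 - Defs.mono T) * x) = sig lam (x - x * Defs.mono T)"
    by (simp add: algebra_simps)
  also have "\<dots> = 0" by (simp add: sig_diff sig_shift[OF add T])
  finally have z: "sig lam ((1 - Defs.mono T) * x) = 0" .
  have ne: "(- t0) \<noteq> 0" using lneg l0 by auto
  have e: "of_nat n * (1 - Defs.mono (- t0)) = Poly_Mapping.single 0 (of_nat n :: complex) - Poly_Mapping.single (- t0) (of_nat n)"
    by (simp add: Defs.mono_def algebra_simps single_of_nat[symmetric] mult_single del: single_of_nat)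
  have "sig lam (of_nat n * (1 - Defs.mono (- t0))) = of_nat n"
    unfolding e sig_diff
    by (subst (1 2) sig_superset[of "{0, - t0}"]) (use ne lneg l0 in \<open>auto simp: lookup_single lookup_of_nat when_def in_keys_iff\<close>)
  with z x n show False by simp
qed



definition Aw :: "nat \<Rightarrow> nat \<Rightarrow> nat \<Rightarrow> word" where
  "Aw k l i = concat (map (Wletter k) [i..<i+l])"

lemma ab_rep_False: "ab \<phi> (replicate q (g, False)) = - ab \<phi> (replicate q (g, True))"
  by (induction q) (simp_all add: algebra_simps)

lemma ab_Wletter: "ab \<phi> (Wletter k j) = \<phi> (WGen (j mod k))"
  by (simp add: Wletter_def ab_append ab_rep_False)

lemma ab_concat_W: "ab \<phi> (concat (map (Wletter k) js)) = (\<Sum>j\<leftarrow>js. \<phi> (WGen (j mod k)))"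
  by (induction js) (simp_all add: ab_append ab_Wletter)

lemma RB_Aw: "RB_word k l i = Aw k l i @ word_inv (Aw k l (Suc i))"
  by (simp add: RB_word_def Aw_def)

lemma Aw_shift:
  assumes "l > 0"
  shows "Aw k l i @ Wletter k (i+l) = Wletter k i @ Aw k l (Suc i)"
proof -
  have "[i..<i+l] @ [i+l] = [i..<Suc (i+l)]" by simp
  also have "\<dots> = i # [Suc i..<Suc (i+l)]" by (rule upt_conv_Cons) simp
  finally have "[i..<i+l] @ [i+l] = i # [Suc i..<Suc i + l]" by simp
  then have "concat (map (Wletter k) ([i..<i+l] @ [i+l])) = concat (map (Wletter k) (i # [Suc i..<Suc i + l]))"
    by simp
  then show ?thesis by (simp add: Aw_def)
qed

lemma ab_Aw_Suc:
  assumes "l > 0" "k dvd l"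
  shows "ab \<phi> (Aw k l (Suc i)) = ab \<phi> (Aw k l i)"
proof -
  have "ab \<phi> (Aw k l i @ Wletter k (i+l)) = ab \<phi> (Wletter k i @ Aw k l (Suc i))"
    using Aw_shift[OF assms(1)] by simp
  moreover have "(i + l) mod k = i mod k" using assms(2) by (auto elim!: dvdE)
  ultimately show ?thesis by (simp add: ab_append ab_Wletter algebra_simps)
qed

lemma ab_Aw:
  assumes "l > 0" "k dvd l"
  shows "ab \<phi> (Aw k l i) = ab \<phi> (Aw k l 0)"
proof (induction i)
  case (Suc i) then show ?case using ab_Aw_Suc[OF assms, of \<phi> i] by simp
qed simp

lemma fox_RB:
  assumes "l > 0" "k dvd l"
  shows "fox \<phi> y (RB_word k l i) = fox \<phi> y (Aw k l i) - fox \<phi> y (Aw k l (Suc i))"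
  by (simp add: RB_Aw fox_append fox_inv ab_Aw_Suc[OF assms] mono_neg' mult.assoc[symmetric])

lemma Wletter_small: "i < k \<Longrightarrow> Wletter k i = [(WGen i, True)]"
  by (simp add: Wletter_def)

lemma word_inv_rep: "word_inv (replicate n (g, True)) = replicate n (g, False)"
  by (simp add: word_inv_def)

lemma Wletter_big:
  assumes "i < k" "l = n * k"
  shows "Wletter k (i + l) = replicate n (UBar, True) @ [(WGen i, True)] @ word_inv (replicate n (UBar, True))"
proof -
  have "(i + l) div k = n" "(i + l) mod k = i" using assms by auto
  then show ?thesis by (simp add: Wletter_def word_inv_rep)
qed



lemma fox_Wbig:
  assumes "i < k" "l = n * k"
  shows "fox \<phi> y (Wletter k (i + l)) =
    fox \<phi> y (replicate n (UBar, True))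
    + Defs.mono (ab \<phi> (replicate n (UBar, True))) * (if WGen i = y then 1 else 0)
    - Defs.mono (\<phi> (WGen i)) * fox \<phi> y (replicate n (UBar, True))"
proof -
  let ?r = "replicate n (UBar, True)"
  have "Defs.mono (ab \<phi> ?r) * (Defs.mono (\<phi> (WGen i)) * (- Defs.mono (- ab \<phi> ?r) * fox \<phi> y ?r))
     = - Defs.mono (\<phi> (WGen i)) * fox \<phi> y ?r"
    using mono_neg'[of "ab \<phi> ?r"] by (simp add: algebra_simps)
  then show ?thesis
    by (simp add: Wletter_big[OF assms] fox_append fox_inv algebra_simps)
qed

lemma step_identity:
  assumes "i < k" "l = n * k" "n > 0" "k dvd l"
  shows "fox \<phi> y (Aw k l i) + Defs.mono (ab \<phi> (Aw k l 0)) *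
      (fox \<phi> y (replicate n (UBar, True))
       + Defs.mono (ab \<phi> (replicate n (UBar, True))) * (if WGen i = y then 1 else 0)
       - Defs.mono (\<phi> (WGen i)) * fox \<phi> y (replicate n (UBar, True)))
    = (if WGen i = y then 1 else 0) + Defs.mono (\<phi> (WGen i)) * fox \<phi> y (Aw k l (Suc i))"
proof -
  have l0: "l > 0" using assms by (metis Euclidean_Rings.div_eq_0_iff div_mult_self1_is_m gr0I less_nat_zero_code
        mult_is_0 neq0_conv)
  have "fox \<phi> y (Aw k l i) + Defs.mono (ab \<phi> (Aw k l i)) * fox \<phi> y (Wletter k (i+l))
     = fox \<phi> y (Wletter k i) + Defs.mono (ab \<phi> (Wletter k i)) * fox \<phi> y (Aw k l (Suc i))"
    by (simp only: fox_append[symmetric] Aw_shift[OF l0])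
  moreover have "fox \<phi> y (Wletter k i) = (if WGen i = y then 1 else 0)"
    by (simp add: Wletter_small[OF assms(1)])
  moreover have "ab \<phi> (Wletter k i) = \<phi> (WGen i)"
    using assms(1) by (simp add: ab_Wletter)
  ultimately show ?thesis
    by (simp only: fox_Wbig[OF assms(1,2)] ab_Aw[OF l0 assms(4), of \<phi> i])
qed

lemma ring_step:
  fixes F F' z e u D x c :: "'a::comm_ring_1"
  assumes cx: "c * x = 1" and h: "F + z * (e + u * D - x * e) = D + x * F'"
  shows "F' + z * e = c * (F + z * e) - (1 - z * u) * c * D"
    and "F - F' = (1 - c) * (F + z * e) + (1 - z * u) * c * D"
proof -
  have "F' = c * x * F'" using cx by simp
  also have "\<dots> = c * (F + z * (e + u * D - x * e) - D)" using h by (simp add: algebra_simps)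
  finally have F': "F' = c * (F + z * (e + u * D - x * e) - D)" .
  have cx': "c * (z * (x * e)) = z * e" using cx by (metis mult.assoc mult.left_commute mult_1)
  show "F' + z * e = c * (F + z * e) - (1 - z * u) * c * D"
    unfolding F' using cx' by (simp add: algebra_simps)
  show "F - F' = (1 - c) * (F + z * e) + (1 - z * u) * c * D"
    unfolding F' using cx' by (simp add: algebra_simps)
qed

lemma rec_dvd:
  fixes V :: "nat \<Rightarrow> 'a::comm_ring_1"
  assumes step: "\<And>i. i < k \<Longrightarrow> V (Suc i) = c i * V i - G * c i * D i" and gG: "g dvd G"
  shows "i \<le> k \<Longrightarrow> g dvd V i - (\<Prod>m<i. c m) * V 0"
proof (induction i)
  case (Suc i)
  then have "g dvd V i - (\<Prod>m<i. c m) * V 0" by simp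
  moreover have "V (Suc i) - (\<Prod>m<Suc i. c m) * V 0 = c i * (V i - (\<Prod>m<i. c m) * V 0) - G * c i * D i"
    using step[of i] Suc.prems by (simp add: algebra_simps)
  ultimately show ?case using gG by (simp add: dvd_diff dvd_mult dvd_mult2)
qed simp



lemma mono_sum: "Defs.mono (\<Sum>s\<in>S. f s :: 'h::ab_group_add) = (\<Prod>s\<in>S. Defs.mono (f s))"
  by (induction S rule: infinite_finite_induct) (simp_all add: mono_add)

lemma mono_rep: "Defs.mono (ab \<phi> (replicate q (g, True))) = Defs.mono (\<phi> g) ^ q"
  by (induction q) (simp_all add: mono_add)

lemma block_upt:
  assumes "k > 0"
  shows "[0..<Suc q * k] = [0..<q * k] @ ((q * k) # [Suc (q * k)..<q * k + k])"
proof -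
  have "[0..<Suc q * k] = [0..<q * k] @ [q * k..<q * k + k]"
    using upt_add_eq_append[of 0 "q * k" k] by (simp add: add.commute)
  also have "[q * k..<q * k + k] = (q * k) # [Suc (q * k)..<q * k + k]"
    using assms by (simp add: upt_conv_Cons)
  finally show ?thesis .
qed

lemma sum_block:
  assumes "k > 0"
  shows "(\<Sum>j\<leftarrow>[q * k..<q * k + k]. f (j mod k)) = (\<Sum>s<k. f s)"
proof -
  have "[q * k..<q * k + k] = map (\<lambda>i. i + q * k) [0..<k]" by (simp add: map_add_upt add.commute)
  then have "(\<Sum>j\<leftarrow>[q * k..<q * k + k]. f (j mod k)) = (\<Sum>j\<leftarrow>[0..<k]. f ((j + q * k) mod k))"
    by (simp add: comp_def)
  also have "\<dots> = (\<Sum>j\<leftarrow>[0..<k]. f j)"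
    by (rule arg_cong[where f = sum_list], rule map_cong) auto
  also have "\<dots> = (\<Sum>s<k. f s)"
    by (simp add: sum_set_upt_conv_sum_list_nat[symmetric] atLeast0LessThan)
  finally show ?thesis .
qed

lemma ab_prefix:
  assumes "k > 0"
  shows "ab \<phi> (concat (map (Wletter k) [0..<q * k])) = (\<Sum>r<q. \<Sum>s<k. \<phi> (WGen s))"
proof (induction q)
  case (Suc q)
  have "[0..<Suc q * k] = [0..<q * k] @ [q * k..<q * k + k]"
    using upt_add_eq_append[of 0 "q * k" k] by (simp add: add.commute)
  moreover have "ab \<phi> (concat (map (Wletter k) [q * k..<q * k + k])) = (\<Sum>s<k. \<phi> (WGen s))"
    by (simp only: ab_concat_W sum_block[OF assms, where q=q and f="\<lambda>s. \<phi> (WGen s)"])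
  ultimately show ?case using Suc
    by (simp add: ab_append)
qed simp

lemma mono_ab_prefix:
  assumes "k > 0"
  shows "Defs.mono (ab \<phi> (concat (map (Wletter k) [0..<q * k]))) = Defs.mono (\<Sum>s<k. \<phi> (WGen s)) ^ q"
  by (simp add: ab_prefix[OF assms] mono_sum[where f="\<lambda>r. \<Sum>s<k. \<phi> (WGen s)"])

lemma fox_rest_zero:
  assumes "k > 0"
  shows "fox \<phi> (WGen 0) (concat (map (Wletter k) [Suc (q * k)..<q * k + k])) = 0"
proof (rule fox_notin)
  have "\<not> k dvd j" if "Suc (q * k) \<le> j" "j < q * k + k" for j
  proof -
    have "j = q * k + (j - q * k)" using that by simp
    then have "j mod k = (j - q * k) mod k" by (metis mod_mult_self3)
    also have "\<dots> = j - q * k" using that by simp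
    finally have "j mod k \<noteq> 0" using that by simp
    then show "\<not> k dvd j" by (simp add: dvd_eq_mod_eq_0)
  qed
  then show "WGen 0 \<notin> fst ` set (concat (map (Wletter k) [Suc (q * k)..<q * k + k]))"
    by (auto simp: Wletter_def)
qed

lemma fox_W_block:
  assumes "k > 0"
  shows "fox \<phi> (WGen 0) (Wletter k (q * k)) = Defs.mono (\<phi> UBar) ^ q"
proof -
  have "Wletter k (q * k) = replicate q (UBar, True) @ [(WGen 0, True)] @ replicate q (UBar, False)"
    using assms by (simp add: Wletter_def)
  moreover have "fox \<phi> (WGen 0) (replicate q (UBar, b)) = 0" for b by (rule fox_notin) auto
  ultimately show ?thesis
    by (simp add: fox_append mono_rep)
qed

lemma fox_prefix:
  assumes "k > 0"
  shows "fox \<phi> (WGen 0) (concat (map (Wletter k) [0..<q * k]))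
      = (\<Sum>r<q. Defs.mono (\<phi> UBar + (\<Sum>s<k. \<phi> (WGen s))) ^ r)"
proof (induction q)
  case (Suc q)
  show ?case
    unfolding block_upt[OF assms, of q]
    by (simp add: fox_append Suc fox_rest_zero[OF assms] fox_W_block[OF assms]
          mono_ab_prefix[OF assms] mono_add power_mult_distrib)
qed simp



lemma sum_fun_apply: "(\<Sum>s\<in>S. f s) x = (\<Sum>s\<in>S. f s x)"
  by (induction S rule: infinite_finite_induct) auto

lemma exists_coords:
  fixes tu :: "'n \<Rightarrow> int" and tw :: "nat \<Rightarrow> ('n \<Rightarrow> int)"
  assumes k0: "k > 0"
    and indep: "\<And>c a. (\<lambda>x. c * tu x + (\<Sum>s<k. a s * tw s x)) = 0
                   \<Longrightarrow> c = 0 \<and> (\<forall>s<k. a s = 0)"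
  shows "\<exists>p q. (tu + (\<Sum>s<k. tw s)) q * tw 0 p - (tu + (\<Sum>s<k. tw s)) p * tw 0 q \<noteq> 0"
proof (rule ccontr)
  define T where "T = tu + (\<Sum>s<k. tw s)"
  have Tx: "T x = tu x + (\<Sum>s<k. tw s x)" for x by (simp add: T_def sum_fun_apply)
  assume "\<not> ?thesis"
  then have H: "T q * tw 0 p = T p * tw 0 q" for p q unfolding T_def by auto
  show False
  proof (cases "\<forall>x. T x = 0")
    case True
    have "(\<lambda>x. 1 * tu x + (\<Sum>s<k. 1 * tw s x)) = 0"
      using True by (auto simp: Tx)
    from indep[OF this] show False by simp
  next
    case False
    then obtain p where p: "T p \<noteq> 0" by auto
    define a where "a (s::nat) = (if s = 0 then tw 0 p - T p else tw 0 p)" for s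
    have sa: "(\<Sum>s<k. a s * tw s x) = tw 0 p * (\<Sum>s<k. tw s x) - T p * tw 0 x" for x
    proof -
      have "(\<Sum>s<k. a s * tw s x) = (\<Sum>s<k. tw 0 p * tw s x - (if s = 0 then T p * tw 0 x else 0))"
        by (rule sum.cong) (auto simp: a_def algebra_simps)
      also have "\<dots> = tw 0 p * (\<Sum>s<k. tw s x) - T p * tw 0 x"
        using k0 by (simp add: sum_subtractf sum_distrib_left)
      finally show ?thesis .
    qed
    have "(\<lambda>x. tw 0 p * tu x + (\<Sum>s<k. a s * tw s x)) = 0"
    proof
      fix x
      have "tw 0 p * tu x + (\<Sum>s<k. a s * tw s x) = tw 0 p * T x - T p * tw 0 x"
        by (simp add: sa Tx algebra_simps)
      also have "\<dots> = 0" using H[of x p] by (simp add: mult.commute)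
      finally show "tw 0 p * tu x + (\<Sum>s<k. a s * tw s x) = 0 x" by simp
    qed
    from indep[OF this] k0 have "tw 0 p = 0" "a 0 = 0" by auto
    then show False using p by (simp add: a_def)
  qed
qed



theorem lemma2p12:
  fixes k l :: nat
    and tu :: "'n::finite \<Rightarrow> int"
    and tw :: "nat \<Rightarrow> ('n \<Rightarrow> int)"
  assumes k: "k \<ge> 2"
    and l: "l \<ge> 2"
    and kl: "k dvd l"
    and indep: "\<And>c a. (\<lambda>x. c * tu x + (\<Sum>s<k. a s * tw s x)) = 0
                   \<Longrightarrow> c = 0 \<and> (\<forall>s<k. a s = 0)"
  shows "rank_mod
           {x * (1 - mono (tu + (\<Sum>s<k. tw s))) | x. True}
           (fox_matrix_RB (\<lambda>g. case g of UBar \<Rightarrow> tu | WGen s \<Rightarrow> tw s) k l) = 1"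
proof -
  define \<phi> where "\<phi> = (\<lambda>g. case g of UBar \<Rightarrow> tu | WGen s \<Rightarrow> tw s)"
  define T where "T = tu + (\<Sum>s<k. tw s)"
  define g :: "('n \<Rightarrow> int) \<Rightarrow>\<^sub>0 complex" where "g = 1 - Defs.mono T"
  define P where "P = {x * g | x. True}"
  have k0: "k > 0" using k by simp
  obtain n where ln: "l = n * k" using kl by (metis dvdE mult.commute)
  have n0: "n > 0" using l ln by (cases n) auto
  have l0: "l > 0" using l by simp
  define col where "col j = (if j < k then WGen j else UBar)" for j
  define M where "M = fox_matrix_RB \<phi> k l"
  have Mij: "M $$ (i,j) = fox \<phi> (col j) (RB_word k l i)" if "i < k" "j < k + 1" for i j
    using that by (simp add: M_def fox_matrix_RB_def col_def)
  have dimM: "dim_row M = k" "dim_col M = k + 1" by (simp_all add: M_def fox_matrix_RB_def)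
  define z where "z = Defs.mono (ab \<phi> (Aw k l 0))"
  define u where "u = Defs.mono (ab \<phi> (replicate n (UBar, True)))"
  define c where "c i = Defs.mono (- \<phi> (WGen i))" for i
  define V where "V i y = fox \<phi> y (Aw k l i) + z * fox \<phi> y (replicate n (UBar, True))" for i y
  define D where "D i y = (if WGen i = y then 1 else 0 :: ('n \<Rightarrow> int) \<Rightarrow>\<^sub>0 complex)" for i y
  have sumphi: "(\<Sum>s<k. \<phi> (WGen s)) = (\<Sum>s<k. tw s)" by (simp add: \<phi>_def)
  have zu: "z * u = Defs.mono T ^ n"
  proof -
    have "z = Defs.mono (\<Sum>s<k. tw s) ^ n"
      using mono_ab_prefix[OF k0, of \<phi> n] by (simp add: z_def Aw_def ln sumphi)
    moreover have "u = Defs.mono tu ^ n" by (simp add: u_def mono_rep \<phi>_def)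
    ultimately show ?thesis by (simp add: T_def mono_add power_mult_distrib mult.commute)
  qed
  have gG: "g dvd (1 - z * u)"
    unfolding zu g_def one_diff_power_eq by simp
  have cx: "c i * Defs.mono (\<phi> (WGen i)) = 1" for i by (simp add: c_def mono_neg)
  have steps: "V (Suc i) y = c i * V i y - (1 - z * u) * c i * D i y
      \<and> fox \<phi> y (RB_word k l i) = (1 - c i) * V i y + (1 - z * u) * c i * D i y" if i: "i < k" for i y
  proof -
    note r = ring_step[OF cx[of i] step_identity[OF i ln n0 kl, of \<phi> y, folded z_def u_def]]
    show ?thesis
      using r unfolding V_def D_def fox_RB[OF l0 kl] by simp
  qed
  have recV: "g dvd V i y - (\<Prod>m<i. c m) * V 0 y" if "i \<le> k" for i y
    by (rule rec_dvd[OF _ gG that]) (use steps in blast)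
  define \<alpha> where "\<alpha> i = (1 - c i) * (\<Prod>m<i. c m)" for i
  define \<beta> where "\<beta> j = V 0 (col j)" for j
  have entry: "g dvd M $$ (i,j) - \<alpha> i * \<beta> j" if i: "i < k" and j: "j < k + 1" for i j
  proof -
    have "M $$ (i,j) - \<alpha> i * \<beta> j = (1 - c i) * (V i (col j) - (\<Prod>m<i. c m) * V 0 (col j))
          + (1 - z * u) * c i * D i (col j)"
      using steps[OF i, of "col j"] by (simp add: Mij[OF i j] \<alpha>_def \<beta>_def algebra_simps)
    moreover have "g dvd (1 - c i) * (V i (col j) - (\<Prod>m<i. c m) * V 0 (col j))"
      using recV[of i "col j"] i by (simp add: dvd_mult)
    moreover have "g dvd (1 - z * u) * c i * D i (col j)"
      using gG by (simp add: dvd_mult2)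
    ultimately show ?thesis by (simp add: dvd_add)
  qed
  have minors: "det (submatrix M I J) \<in> P"
    if I: "I \<subseteq> {..<k}" and J: "J \<subseteq> {..<k+1}" and cI: "card I = r" and cJ: "card J = r"
      and r: "r \<ge> 2" for I J r
  proof -
    have eI: "{i. i < dim_row M \<and> i \<in> I} = I" using I dimM by auto
    have eJ: "{j. j < dim_col M \<and> j \<in> J} = J" using J dimM by auto
    have S: "submatrix M I J \<in> carrier_mat r r"
      using dim_submatrix(1)[of M I J] dim_submatrix(2)[of M I J] unfolding eI eJ cI cJ carrier_mat_def by simp
    define B where "B = mat r r (\<lambda>(a,b). \<alpha> (pick I a) * \<beta> (pick J b))"
    have "g dvd det (submatrix M I J) - det B"
    proof (rule det_cong_dvd[OF S])
      show "B \<in> carrier_mat r r" by (simp add: B_def)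
      fix a b assume a: "a < r" and b: "b < r"
      have pa: "pick I a \<in> I" using a cI by (intro pick_in_set) simp
      have pb: "pick J b \<in> J" using b cJ by (intro pick_in_set) simp
      have "submatrix M I J $$ (a,b) = M $$ (pick I a, pick J b)"
        by (rule submatrix_index) (simp_all only: eI eJ cI cJ a b)
      moreover have "B $$ (a,b) = \<alpha> (pick I a) * \<beta> (pick J b)" using a b by (simp add: B_def)
      moreover have "pick I a < k" using pa I by auto
      moreover have "pick J b < k + 1" using pb J by auto
      ultimately show "g dvd submatrix M I J $$ (a,b) - B $$ (a,b)"
        using entry by simp
    qed
    moreover have "det B = 0" unfolding B_def
      by (rule det_rank1[OF r, of "\<lambda>a. \<alpha> (pick I a)" "\<lambda>b. \<beta> (pick J b)"])
    ultimately have "g dvd det (submatrix M I J)" by simp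
    then obtain w where "det (submatrix M I J) = g * w" by (rule dvdE)
    then show ?thesis unfolding P_def by (auto simp: mult.commute)
  qed
  obtain p q where pq: "T q * tw 0 p - T p * tw 0 q \<noteq> 0"
    using exists_coords[OF k0 indep] unfolding T_def by blast
  define lam where "lam h = T q * h p - T p * h q" for h :: "'n \<Rightarrow> int"
  have lam_add: "lam (a + b) = lam a + lam b" for a b by (simp add: lam_def algebra_simps)
  have lamT: "lam T = 0" by (simp add: lam_def)
  have lamw: "lam (tw 0) \<noteq> 0" using pq by (simp add: lam_def)
  have notdvd: "\<not> g dvd (of_nat n * (1 - Defs.mono (- tw 0)))"
    unfolding g_def by (rule not_dvd_char[OF lam_add lamT lamw n0])
  have notin: "det (submatrix M {0} {0}) \<notin> P"
  proof
    assume "det (submatrix M {0} {0}) \<in> P"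
    then have gM: "g dvd det (submatrix M {0} {0})" by (auto simp: P_def)
    have e0: "{i. i < dim_row M \<and> i \<in> {0}} = {0}" "{j. j < dim_col M \<and> j \<in> {0}} = {0}"
      using dimM k0 by auto
    have S1: "submatrix M {0} {0} \<in> carrier_mat 1 1"
      using dim_submatrix(1)[of M "{0}" "{0}"] dim_submatrix(2)[of M "{0}" "{0}"] unfolding e0 carrier_mat_def by simp
    have "det (submatrix M {0} {0}) = submatrix M {0} {0} $$ (0,0)" by (rule det_single[OF S1])
    also have "\<dots> = M $$ (pick {0} 0, pick {0} 0)" by (rule submatrix_index) (simp_all only: e0, simp_all)
    also have "\<dots> = M $$ (0,0)" by simp
    finally have "g dvd M $$ (0,0)" using gM by simp
    moreover have "g dvd M $$ (0,0) - \<alpha> 0 * \<beta> 0" using entry[of 0 0] k0 by simp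
    ultimately have "g dvd M $$ (0,0) - (M $$ (0,0) - \<alpha> 0 * \<beta> 0)"
      by (rule dvd_diff)
    then have g1: "g dvd \<alpha> 0 * \<beta> 0" by simp
    have col0: "col 0 = WGen 0" using k0 by (simp add: col_def)
    have "fox \<phi> (WGen 0) (replicate n (UBar, True)) = 0" by (rule fox_notin) auto
    then have "\<beta> 0 = fox \<phi> (WGen 0) (Aw k l 0)" by (simp add: \<beta>_def V_def col0)
    also have "\<dots> = (\<Sum>r<n. Defs.mono T ^ r)"
      using fox_prefix[OF k0, of \<phi> n] by (simp add: Aw_def ln sumphi T_def \<phi>_def)
    finally have b0: "\<beta> 0 = (\<Sum>r<n. Defs.mono T ^ r)" .
    have "g dvd (\<Sum>r<n. Defs.mono T ^ r - 1)"
    proof (rule dvd_sum)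
      fix r
      have "Defs.mono T ^ r - 1 = - (g * (\<Sum>i<r. Defs.mono T ^ i))"
        unfolding g_def one_diff_power_eq[symmetric] by simp
      then show "g dvd Defs.mono T ^ r - 1" by simp
    qed
    then have gb: "g dvd \<beta> 0 - of_nat n" by (simp add: b0 sum_subtractf)
    have "(1 - c 0) * of_nat n = \<alpha> 0 * \<beta> 0 - (1 - c 0) * (\<beta> 0 - of_nat n)"
      by (simp add: \<alpha>_def algebra_simps)
    moreover have "g dvd \<alpha> 0 * \<beta> 0 - (1 - c 0) * (\<beta> 0 - of_nat n)"
      using g1 gb by (simp add: dvd_diff dvd_mult)
    ultimately have "g dvd (1 - c 0) * of_nat n" by simp
    then show False using notdvd by (simp add: c_def \<phi>_def mult.commute)
  qed
  define R where "R = {r. \<exists>I J. I \<subseteq> {..<dim_row M} \<and> J \<subseteq> {..<dim_col M} \<and>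
        card I = r \<and> card J = r \<and> det (submatrix M I J) \<notin> P}"
  have R1: "1 \<in> R" unfolding R_def
    by (rule CollectI, rule exI[of _ "{0}"], rule exI[of _ "{0}"]) (use notin dimM k0 in auto)
  have Rle: "r \<le> 1" if "r \<in> R" for r
  proof (rule ccontr)
    assume r: "\<not> r \<le> 1"
    from that obtain I J where "I \<subseteq> {..<k}" "J \<subseteq> {..<k+1}" "card I = r" "card J = r"
      "det (submatrix M I J) \<notin> P" unfolding R_def dimM by blast
    with minors[of I J r] r show False by simp
  qed
  have "finite R" using Rle by (meson finite_nat_set_iff_bounded_le)
  then have "Max R = 1" using R1 Rle by (intro Max_eqI) auto
  then have "rank_mod P M = 1" by (simp add: rank_mod_def R_def)
  then show ?thesis by (simp add: P_def g_def T_def M_def \<phi>_def)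
qed

end
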